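(* Let $k\in\{1,\dots,n\}$ and let $R$ be a $k$-return of an $n$-DPDA. Then $\mathsf{pop}^k(\mathrm{top}^k(R(0)))\cong\mathrm{top}^k(R(|R|))$, and for every $0$-stack $s^0$ in $\mathrm{top}^k(R(|R|))$, $\mathrm{hist}(R,s^0)$ is the $0$-stack at the corresponding location in $\mathsf{pop}^k(\mathrm{top}^k(R(0)))$.
   Context: Stacks: fix order $n\ge1$, finite stack alphabet $\Gamma$. A $0$-stack is $(\gamma,x)$ with $\gamma\in\Gamma$, $x=(x_n,\dots,x_1)$ a vector of $n$ positive integers (position). For $k\in\{1,\dots,n\}$ a $k$-stack is a finite list $[s_1,\dots,s_m]$ ($m\ge0$) of nonempty $(k-1)$-stacks such that for some $x_n,\dots,x_{k+1}$, every position in $s_i$ has the form $(x_n,\dots,x_{k+1},i,y_{k-1},\dots,y_1)$. The top is at the right; $s^k:s^{k-1}$ appends at the top (right-associative); for $s^r=t^r:t^{r-1}:\dots:t^k$, $\mathrm{top}^k(s^r)=t^k$. Equality of stacks includes positions. $\mathrm{pos}{\downarrow}(s)$ deletes all positions; $s\cong t$ iff $\mathrm{pos}{\downarrow}(s)=\mathrm{pos}{\downarrow}(t)$. For $k<n$, $\mathsf p_{+1}(s^k)$ adds $1$ to the $(n-k)$-th coordinate of all positions. Operations of order $k\ge1$: $\mathsf{pop}^k(s^r:\dots:s^k:s^{k-1})=s^r:\dots:s^k$, defined only if the topmost $k$-stack has at least two $(k-1)$-stacks; $\mathsf{push}^k_\gamma(s^r:\dots:s^0)=s^r:\dots:s^{k+1}:(s^k:\dots:s^0):\mathsf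 p_{+1}(s^{k-1}:\dots:s^1:(\gamma,x))$ where $s^0=(\gamma',x)$. An $n$-DPDA has transitions determined by state and topmost stack symbol, each either $\mathrm{read}(\vec q)$ ($\vec q:A\to Q$ injective; leads to $(\vec q(a),s)$, reading $a$) or $(q,op)$ with $op$ a stack operation of order $\le n$ (leads to $(q,op(s))$ if defined). Configurations are (state, nonempty $n$-stack). A run is a finite sequence $R=c_0,\dots,c_m$ with each $c_i$ a successor of $c_{i-1}$; $R(i)=c_i$, $|R|=m$, $R[i,j]=c_i,\dots,c_j$. $\mathrm{top}^k(c)$, $\mathsf{pop}^k(c)$ refer to the stack of $c$. History: for a run $R$ and a $0$-stack $s^0$ of $R(|R|)$, $\mathrm{hist}(R,s^0)$ is a $0$-stack of $R(0)$: if $|R|=0$ it is $s^0$; if $R=S\circ T$, $|T|=1$, and the last step is a read or a $\mathsf{pop}$, or a $\mathsf{push}^r_\gamma$ with $s^0$ not in the topmost $(r-1)$-stack of $R(|R|)$, it is $\mathrm{hist}(S,s^0)$; if the last step is $\mathsf{push}^r_\gamma$ and $s^0$ is in the topmost $(r-1)$-stack of $R(|R|)$, it is $\mathrm{hist}(S,t^0)$ with $t^0$ equal to $s^0$ with the $(n-r+1)$-th position coordinate decreased by $1$. For a $k$-stack $s^k$ of $R(|R|)$, $k\ge1$, $\mathrm{hist}(R,s^k)$ is the $k$-stack of $R(0)$ containing $\mathrm{hist}(R,s^0)$ for all $0$-stacks $s^0$ of $s^k$. For $k\in\{0,\dots,n\}$, $R$ is $k$-upper if $\mathrm{hist}(R,\mathrm{top}^k(R(|R|)))=\mathrm{top}^k(R(0))$.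 For $k\in\{1,\dots,n\}$, $R$ is a $k$-return if $\mathrm{hist}(R,\mathrm{top}^{k-1}(R(|R|)))=\mathrm{top}^{k-1}(\mathsf{pop}^k(R(0)))$ and $R[i,|R|]$ is not $(k-1)$-upper for every $i\in\{0,\dots,|R|-1\}$. *)

theory Defs
  imports Main
begin

(* A 0-stack is  Zst gamma x  where x = [x_n, ..., x_1] is the
   position (list of length n; 0-based list index j holds coordinate x_(n-j), i.e. the
   (j+1)-th coordinate).  A k-stack (k >= 1) is  Lst [s_1, ..., s_m], top at the right. *)
datatype 'g stk = Zst 'g "nat list" | Lst "'g stk list"

(* well-formedness: wfst n j p s  -- s is a j-stack (for stacks of order n) all of whose
   positions start with the prefix p = [x_n, ..., x_(j+1)] *)
fun wfst :: "nat \<Rightarrow> nat \<Rightarrow> nat list \<Rightarrow> 'g stk \<Rightarrow> bool" where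
  "wfst n 0 p (Zst g x) = (x = p)"
| "wfst n (Suc j) p (Lst ss) =
     (\<forall>i<length ss. ss ! i \<noteq> Lst [] \<and> wfst n j (p @ [Suc i]) (ss ! i))"
| "wfst n _ _ _ = False"

definition nstack :: "nat \<Rightarrow> 'g stk \<Rightarrow> bool" where
  "nstack n s = (wfst n n [] s \<and> s \<noteq> Lst [])"

fun zeros :: "'g stk \<Rightarrow> 'g stk set" where
  "zeros (Zst g x) = {Zst g x}"
| "zeros (Lst ss) = (\<Union>s\<in>set ss. zeros s)"

fun zpos :: "'g stk \<Rightarrow> nat list" where
  "zpos (Zst g x) = x"
| "zpos (Lst ss) = []"

definition positions :: "'g stk \<Rightarrow> nat list set" where
  "positions s = zpos ` zeros s"

fun posdown :: "'g stk \<Rightarrow> 'g stk" where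
  "posdown (Zst g x) = Zst g []"
| "posdown (Lst ss) = Lst (map posdown ss)"

fun map_pos :: "(nat list \<Rightarrow> nat list) \<Rightarrow> 'g stk \<Rightarrow> 'g stk" where
  "map_pos f (Zst g x) = Zst g (f x)"
| "map_pos f (Lst ss) = Lst (map (map_pos f) ss)"

(* substack at a location (list of 0-based indices, outermost first) *)
fun at_path :: "'g stk \<Rightarrow> nat list \<Rightarrow> 'g stk option" where
  "at_path s [] = Some s"
| "at_path (Lst ss) (i # is) = (if i < length ss then at_path (ss ! i) is else None)"
| "at_path (Zst g x) (i # is) = None"

fun top_st :: "nat \<Rightarrow> nat \<Rightarrow> 'g stk \<Rightarrow> 'g stk" where
  "top_st 0 k s = s"
| "top_st (Suc m) k (Zst g x) = Zst g x"
| "top_st (Suc m) k (Lst ss) = (if Suc m \<le> k then Lst ss else top_st m k (last ss))"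

fun upd_top :: "nat \<Rightarrow> nat \<Rightarrow> ('g stk \<Rightarrow> 'g stk) \<Rightarrow> 'g stk \<Rightarrow> 'g stk" where
  "upd_top 0 k f s = f s"
| "upd_top (Suc m) k f (Zst g x) = Zst g x"
| "upd_top (Suc m) k f (Lst ss) =
     (if Suc m \<le> k then f (Lst ss) else Lst (butlast ss @ [upd_top m k f (last ss)]))"

definition pop_st :: "nat \<Rightarrow> nat \<Rightarrow> 'g stk \<Rightarrow> 'g stk option" where
  "pop_st m k s = (case top_st m k s of
      Lst ss \<Rightarrow> if 2 \<le> length ss then Some (upd_top m k (\<lambda>_. Lst (butlast ss)) s) else None
    | Zst g x \<Rightarrow> None)"

definition set_top_sym :: "nat \<Rightarrow> 'g \<Rightarrow> 'g stk \<Rightarrow> 'g stk" where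
  "set_top_sym m \<gamma> s = upd_top m 0 (\<lambda>t. case t of Zst g x \<Rightarrow> Zst \<gamma> x | Lst ss \<Rightarrow> Lst ss) s"

(* push^k_gamma applied to an n-stack; p_{+1} on the copied (k-1)-stack adds 1 to the
   (n-k+1)-th coordinate, i.e. list index n-k *)
definition push_st :: "nat \<Rightarrow> nat \<Rightarrow> 'g \<Rightarrow> 'g stk \<Rightarrow> 'g stk" where
  "push_st n k \<gamma> s = upd_top n k (\<lambda>t. case t of
       Lst ss \<Rightarrow> Lst (ss @ [map_pos (\<lambda>x. x[n - k := Suc (x ! (n - k))])
                                  (set_top_sym (k - 1) \<gamma> (last ss))])
     | Zst g x \<Rightarrow> Zst g x) s"

datatype 'g stack_op = Pop nat | Push nat 'g

datatype ('q, 'a, 'g) trans = Read "'a \<Rightarrow> 'q" | Op 'q "'g stack_op"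

fun apply_op :: "nat \<Rightarrow> 'g stack_op \<Rightarrow> 'g stk \<Rightarrow> 'g stk option" where
  "apply_op n (Pop k) s = pop_st n k s"
| "apply_op n (Push k \<gamma>) s = Some (push_st n k \<gamma> s)"

definition dpda :: "nat \<Rightarrow> ('q \<Rightarrow> 'g \<Rightarrow> ('q, 'a, 'g) trans) \<Rightarrow> bool" where
  "dpda n \<delta> = (\<forall>q g. case \<delta> q g of
       Read f \<Rightarrow> inj f
     | Op p (Pop r) \<Rightarrow> 1 \<le> r \<and> r \<le> n
     | Op p (Push r \<gamma>) \<Rightarrow> 1 \<le> r \<and> r \<le> n)"

definition top_sym :: "nat \<Rightarrow> 'g stk \<Rightarrow> 'g" where
  "top_sym n s = (case top_st n 0 s of Zst g x \<Rightarrow> g | Lst ss \<Rightarrow> undefined)"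

type_synonym ('q, 'g) config = "'q \<times> 'g stk"

definition step :: "nat \<Rightarrow> ('q \<Rightarrow> 'g \<Rightarrow> ('q, 'a, 'g) trans) \<Rightarrow> ('q, 'g) config \<Rightarrow> ('q, 'g) config \<Rightarrow> bool" where
  "step n \<delta> c c' = (case \<delta> (fst c) (top_sym n (snd c)) of
       Read f \<Rightarrow> snd c' = snd c \<and> (\<exists>a. fst c' = f a)
     | Op p op \<Rightarrow> fst c' = p \<and> apply_op n op (snd c) = Some (snd c'))"

(* a run R = c_0, ..., c_m is a nonempty list of configurations; |R| = length R - 1 *)
definition is_run :: "nat \<Rightarrow> ('q \<Rightarrow> 'g \<Rightarrow> ('q, 'a, 'g) trans) \<Rightarrow> ('q, 'g) config list \<Rightarrow> bool" where
  "is_run n \<delta> R = (R \<noteq> [] \<and> (\<forall>c\<in>set R. nstack n (snd c)) \<and>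
      (\<forall>i. Suc i < length R \<longrightarrow> step n \<delta> (R ! i) (R ! Suc i)))"

definition back_pos :: "nat \<Rightarrow> ('q \<Rightarrow> 'g \<Rightarrow> ('q, 'a, 'g) trans) \<Rightarrow> ('q, 'g) config \<Rightarrow> ('q, 'g) config
    \<Rightarrow> nat list \<Rightarrow> nat list" where
  "back_pos n \<delta> c c' x = (case \<delta> (fst c) (top_sym n (snd c)) of
       Op p (Push r \<gamma>) \<Rightarrow>
         (if x \<in> positions (top_st n (r - 1) (snd c')) then x[n - r := x ! (n - r) - 1] else x)
     | _ \<Rightarrow> x)"

fun hpos :: "nat \<Rightarrow> ('q \<Rightarrow> 'g \<Rightarrow> ('q, 'a, 'g) trans) \<Rightarrow> ('q, 'g) config list \<Rightarrow> nat \<Rightarrow> nat list \<Rightarrow> nat list" where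
  "hpos n \<delta> R 0 x = x"
| "hpos n \<delta> R (Suc i) x = hpos n \<delta> R i (back_pos n \<delta> (R ! i) (R ! Suc i) x)"

definition hist :: "nat \<Rightarrow> ('q \<Rightarrow> 'g \<Rightarrow> ('q, 'a, 'g) trans) \<Rightarrow> ('q, 'g) config list \<Rightarrow> 'g stk \<Rightarrow> 'g stk" where
  "hist n \<delta> R z = (THE t. t \<in> zeros (snd (hd R)) \<and> zpos t = hpos n \<delta> R (length R - 1) (zpos z))"

(* R is j-upper: hist(R, top^j(R(|R|))) = top^j(R(0)), i.e. top^j(R(0)) is the j-stack of
   R(0) containing the histories of all 0-stacks of top^j(R(|R|)) *)
definition upper :: "nat \<Rightarrow> ('q \<Rightarrow> 'g \<Rightarrow> ('q, 'a, 'g) trans) \<Rightarrow> ('q, 'g) config list \<Rightarrow> nat \<Rightarrow> bool" where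
  "upper n \<delta> R j = (\<forall>z\<in>zeros (top_st n j (snd (last R))).
       hist n \<delta> R z \<in> zeros (top_st n j (snd (hd R))))"

definition is_return :: "nat \<Rightarrow> ('q \<Rightarrow> 'g \<Rightarrow> ('q, 'a, 'g) trans) \<Rightarrow> nat \<Rightarrow> ('q, 'g) config list \<Rightarrow> bool" where
  "is_return n \<delta> k R = ((\<exists>P. pop_st n k (snd (hd R)) = Some P \<and>
       (\<forall>z\<in>zeros (top_st n (k - 1) (snd (last R))).
          hist n \<delta> R z \<in> zeros (top_st n (k - 1) P))) \<and>
     (\<forall>i < length R - 1. \<not> upper n \<delta> (drop i R) (k - 1)))"

end

theory Submission
  imports Defs
begin

lemma zeros_Zst: "z \<in> zeros s \<Longrightarrow> \<exists>g x. z = Zst g x"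
  by (induction s arbitrary: z) auto

lemma wf_zeros: "wfst n j p s \<Longrightarrow> Zst g x \<in> zeros s \<Longrightarrow> length x = length p + j \<and> take (length p) x = p"
proof (induction j arbitrary: p s)
  case 0 then show ?case by (cases s) auto
next
  case (Suc j)
  then obtain ss where s: "s = Lst ss" by (cases s) auto
  with Suc obtain i where i: "i < length ss" "Zst g x \<in> zeros (ss!i)" by (auto simp: in_set_conv_nth)
  with Suc s have "wfst n j (p@[Suc i]) (ss!i)" by auto
  from Suc.IH[OF this i(2)] have "length x = length p + Suc j" "take (Suc (length p)) x = p @ [Suc i]" by auto
  moreover have "take (length p) x = take (length p) (take (Suc (length p)) x)" by (simp add: min_def)
  ultimately show ?case by simp
qed

lemma wf_child_pos: "wfst n (Suc j) p (Lst ss) \<Longrightarrow> i < length ss \<Longrightarrow> Zst g x \<in> zeros (ss!i) \<Longrightarrow>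
   length x = length p + Suc j \<and> take (Suc (length p)) x = p @ [Suc i]"
  using wf_zeros[of n j "p@[Suc i]" "ss!i" g x] by auto

lemma wf_unique: "wfst n j p s \<Longrightarrow> Zst g x \<in> zeros s \<Longrightarrow> Zst g' x \<in> zeros s \<Longrightarrow> g = g'"
proof (induction j arbitrary: p s)
  case 0 then show ?case by (cases s) auto
next
  case (Suc j)
  then obtain ss where s: "s = Lst ss" by (cases s) auto
  with Suc obtain i where i: "i < length ss" "Zst g x \<in> zeros (ss!i)" by (auto simp: in_set_conv_nth)
  from Suc s obtain i' where i': "i' < length ss" "Zst g' x \<in> zeros (ss!i')" by (auto simp: in_set_conv_nth)
  have "i = i'" using wf_child_pos[of n j p ss i g x] wf_child_pos[of n j p ss i' g' x] i i' Suc.prems(1) s by auto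
  with Suc s i i' show ?case by auto
qed


lemma zeros_Lst: "Zst g x \<in> zeros (Lst ss) \<longleftrightarrow> (\<exists>i<length ss. Zst g x \<in> zeros (ss!i))"
  by (auto simp: in_set_conv_nth) (metis nth_mem)

lemma wf_Lst_child: "wfst n (Suc j) p (Lst ss) \<Longrightarrow> i < length ss \<Longrightarrow> wfst n j (p@[Suc i]) (ss!i) \<and> ss!i \<noteq> Lst []"
  by auto

lemma wf_level0: "wfst n 0 p s \<Longrightarrow> \<exists>g. s = Zst g p"
  by (cases s) auto

lemma wf_levelSuc: "wfst n (Suc j) p s \<Longrightarrow> \<exists>ss. s = Lst ss"
  by (cases s) auto

lemma take_Suc_nth: "length p < length x \<Longrightarrow> take (Suc (length p)) x = p @ [a] \<Longrightarrow> x ! length p = a"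
  by (metis nth_append_length nth_take lessI)

lemma top_last_facts:
  assumes "wfst n (Suc j) p (Lst ss)" "ss \<noteq> []"
  shows "wfst n j (p @ [length ss]) (last ss) \<and> last ss \<noteq> Lst [] \<and> last ss = ss ! (length ss - 1)"
  using assms wf_Lst_child[OF assms(1), of "length ss - 1"] by (simp add: last_conv_nth)

lemma top_basic:
  "wfst n j p s \<Longrightarrow> s \<noteq> Lst [] \<Longrightarrow>
    \<exists>g t. top_st j 0 s = Zst g t \<and> Zst g t \<in> zeros s"
proof (induction j arbitrary: p s)
  case 0 then show ?case by (cases s) auto
next
  case (Suc j)
  then obtain ss where s: "s = Lst ss" "ss \<noteq> []" using wf_levelSuc by blast
  from top_last_facts[OF Suc.prems(1)[unfolded s(1)] s(2)] Suc.IH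
  obtain g t where "top_st j 0 (last ss) = Zst g t" "Zst g t \<in> zeros (last ss)" by blast
  then show ?case using s by auto
qed

lemma top_comp: "m \<le> r \<Longrightarrow> r \<le> j \<Longrightarrow> top_st j m s = top_st r m (top_st j r s)"
proof (induction j arbitrary: s)
  case 0 then show ?case by simp
next
  case (Suc j)
  show ?case
  proof (cases s)
    case (Zst g x) then show ?thesis by (cases r; cases m) auto
  next
    case (Lst ss)
    show ?thesis
    proof (cases "r = Suc j")
      case True then show ?thesis using Lst by simp
    next
      case False
      then have "r \<le> j" using Suc by simp
      then show ?thesis using Lst Suc by auto
    qed
  qed
qed

lemma top_self: "top_st m m s = s"
  by (cases m; cases s) auto

lemma top_wf:
  "wfst n j p s \<Longrightarrow> s \<noteq> Lst [] \<Longrightarrow> m \<le> j \<Longrightarrow>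
    wfst n m (take (length p + j - m) (zpos (top_st j 0 s))) (top_st j m s) \<and> top_st j m s \<noteq> Lst [] \<and>
    zeros (top_st j m s) \<subseteq> zeros s"
proof (induction j arbitrary: p s)
  case 0
  then obtain g where "s = Zst g p" using wf_level0 by blast
  then show ?case using 0 by simp
next
  case (Suc j)
  then obtain ss where s: "s = Lst ss" "ss \<noteq> []" using wf_levelSuc by blast
  note L = top_last_facts[OF Suc.prems(1)[unfolded s(1)] s(2)]
  show ?case
  proof (cases "m = Suc j")
    case True
    obtain g t where t: "top_st (Suc j) 0 s = Zst g t" "Zst g t \<in> zeros s" using top_basic Suc.prems by blast
    have "take (length p) t = p" using wf_zeros[OF Suc.prems(1) t(2)] by simp
    then show ?thesis using True Suc.prems t top_self[of "Suc j" s] by simp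
  next
    case False
    then have m: "m \<le> j" using Suc.prems by simp
    have e: "top_st (Suc j) m s = top_st j m (last ss)" using s m by simp
    have e2: "top_st (Suc j) 0 s = top_st j 0 (last ss)" using s by simp
    have "length (p @ [length ss]) + j - m = length p + Suc j - m" using m by simp
    moreover have "zeros (last ss) \<subseteq> zeros s" using s by (auto intro: last_in_set)
    moreover note IH = Suc.IH[of "p @ [length ss]" "last ss"]
    ultimately show ?thesis using L m e e2 by (metis order_trans)
  qed
qed

lemma take_eq_nth: "take N x = take N y \<Longrightarrow> i < N \<Longrightarrow> i < length x \<Longrightarrow> i < length y \<Longrightarrow> x ! i = y ! i"
  by (metis nth_take)

lemma child_pos:
  assumes "wfst n (Suc j) p (Lst ss)" "i < length ss" "Zst g x \<in> zeros (ss!i)"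
  shows "length x = length p + Suc j" "x ! length p = Suc i"
proof -
  from wf_child_pos[OF assms] have "length x = length p + Suc j" "take (Suc (length p)) x = p @ [Suc i]" by auto
  then show "length x = length p + Suc j" "x ! length p = Suc i" using take_Suc_nth[of p x "Suc i"] by auto
qed

lemma F1:
  "wfst n j p s \<Longrightarrow> s \<noteq> Lst [] \<Longrightarrow> m \<le> j \<Longrightarrow> Zst g x \<in> zeros s \<Longrightarrow>
    (Zst g x \<in> zeros (top_st j m s)) = (take (length p + j - m) x = take (length p + j - m) (zpos (top_st j 0 s)))"
proof (induction j arbitrary: p s)
  case 0
  then obtain g' where "s = Zst g' p" using wf_level0 by blast
  then show ?case using 0 by simp
next
  case (Suc j)
  then obtain ss where s: "s = Lst ss" "ss \<noteq> []" using wf_levelSuc by blast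
  note L = top_last_facts[OF Suc.prems(1)[unfolded s(1)] s(2)]
  show ?case
  proof (cases "m = Suc j")
    case True
    obtain g' t where t: "top_st (Suc j) 0 s = Zst g' t" "Zst g' t \<in> zeros s" using top_basic Suc.prems by blast
    have "take (length p) t = p" "take (length p) x = p" using wf_zeros[OF Suc.prems(1) t(2)] wf_zeros[OF Suc.prems(1) Suc.prems(4)] by simp_all
    then show ?thesis using True Suc.prems t top_self[of "Suc j" s] by simp
  next
    case False
    then have m: "m \<le> j" using Suc.prems by simp
    have e: "top_st (Suc j) m s = top_st j m (last ss)" using s m by simp
    have e2: "top_st (Suc j) 0 s = top_st j 0 (last ss)" using s by simp
    have N: "length (p @ [length ss]) + j - m = length p + Suc j - m" using m by simp
    obtain i where i: "i < length ss" "Zst g x \<in> zeros (ss!i)" using Suc.prems(4) s zeros_Lst by metis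
    obtain g' t where t: "top_st j 0 (last ss) = Zst g' t" "Zst g' t \<in> zeros (last ss)" using top_basic L by blast
    have tl: "length t = length p + Suc j" "t ! length p = length ss"
      using child_pos[OF Suc.prems(1)[unfolded s(1)], of "length ss - 1" g' t] t(2) L s(2) by auto
    have xl: "length x = length p + Suc j" "x ! length p = Suc i" using child_pos[OF Suc.prems(1)[unfolded s(1)] i] by auto
    show ?thesis
    proof (cases "i = length ss - 1")
      case True
      then have "Zst g x \<in> zeros (last ss)" using i L by simp
      then have "(Zst g x \<in> zeros (top_st j m (last ss))) = (take (length (p @ [length ss]) + j - m) x = take (length (p @ [length ss]) + j - m) (zpos (top_st j 0 (last ss))))"
        using Suc.IH[of "p @ [length ss]" "last ss"] L m by blast
      then show ?thesis using e e2 N by simp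
    next
      case False
      have "take (length p + Suc j - m) x \<noteq> take (length p + Suc j - m) t"
      proof
        assume "take (length p + Suc j - m) x = take (length p + Suc j - m) t"
        then have "x ! length p = t ! length p" using take_eq_nth[of _ x t "length p"] m tl xl by simp
        then show False using False tl xl i by simp
      qed
      moreover have "Zst g x \<notin> zeros (top_st j m (last ss))"
      proof
        assume "Zst g x \<in> zeros (top_st j m (last ss))"
        then have "Zst g x \<in> zeros (last ss)" using top_wf[OF conjunct1[OF L] _ m] L by blast
        then have "x ! length p = length ss" using child_pos[OF Suc.prems(1)[unfolded s(1)], of "length ss - 1" g x] L s(2) by auto
        then show False using False xl i by simp
      qed
      ultimately show ?thesis using e e2 t by simp
    qed
  qed
qed

lemma F2:
  "wfst n j p s \<Longrightarrow> s \<noteq> Lst [] \<Longrightarrow> Zst g x \<in> zeros s \<Longrightarrow> l < j \<Longrightarrow>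
    take (length p + l) x = take (length p + l) (zpos (top_st j 0 s)) \<Longrightarrow>
    x ! (length p + l) \<le> zpos (top_st j 0 s) ! (length p + l)"
proof (induction j arbitrary: p s l)
  case 0
  then show ?case by simp
next
  case (Suc j)
  then obtain ss where s: "s = Lst ss" "ss \<noteq> []" using wf_levelSuc by blast
  note L = top_last_facts[OF Suc.prems(1)[unfolded s(1)] s(2)]
  have e2: "top_st (Suc j) 0 s = top_st j 0 (last ss)" using s by simp
  obtain i where i: "i < length ss" "Zst g x \<in> zeros (ss!i)" using Suc.prems(3) s zeros_Lst by metis
  obtain g' t where t: "top_st j 0 (last ss) = Zst g' t" "Zst g' t \<in> zeros (last ss)" using top_basic L by blast
  have tl: "length t = length p + Suc j" "t ! length p = length ss"
    using child_pos[OF Suc.prems(1)[unfolded s(1)], of "length ss - 1" g' t] t(2) L s(2) by auto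
  have xl: "length x = length p + Suc j" "x ! length p = Suc i" using child_pos[OF Suc.prems(1)[unfolded s(1)] i] by auto
  show ?case
  proof (cases l)
    case 0
    then show ?thesis using e2 t tl xl i by simp
  next
    case (Suc l')
    have "x ! length p = t ! length p" using take_eq_nth[of _ x t "length p"] Suc.prems(5) e2 t Suc tl xl by simp
    then have "i = length ss - 1" using tl xl by simp
    then have "Zst g x \<in> zeros (last ss)" using i L by simp
    moreover have "length (p @ [length ss]) + l' = length p + l" using Suc by simp
    moreover have "take (length (p @ [length ss]) + l') x = take (length (p @ [length ss]) + l') (zpos (top_st j 0 (last ss)))"
      using Suc.prems(5) e2 Suc by simp
    moreover have "l' < j" using Suc Suc.prems by simp
    ultimately have "x ! (length (p @ [length ss]) + l') \<le> zpos (top_st j 0 (last ss)) ! (length (p @ [length ss]) + l')"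
      using Suc.IH[of "p @ [length ss]" "last ss" l'] L by blast
    then show ?thesis using Suc e2 by simp
  qed
qed

lemma butlast_last_disj:
  assumes "wfst n (Suc j) p (Lst ss)" "ss \<noteq> []"
  shows "zeros (Lst (butlast ss)) \<inter> zeros (last ss) = {}"
proof (rule ccontr)
  assume "zeros (Lst (butlast ss)) \<inter> zeros (last ss) \<noteq> {}"
  then obtain z where z: "z \<in> zeros (Lst (butlast ss))" "z \<in> zeros (last ss)" by blast
  then obtain g x where zx: "z = Zst g x" using zeros_Zst by blast
  from z(1) zx obtain i where i: "i < length ss - 1" "Zst g x \<in> zeros (ss!i)"
    using zeros_Lst[of g x "butlast ss"] by (auto simp: nth_butlast)
  have "x ! length p = Suc i" using child_pos[OF assms(1), of i g x] i by simp
  moreover have "x ! length p = length ss" using child_pos[OF assms(1), of "length ss - 1" g x] z(2) zx assms(2)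
    by (simp add: last_conv_nth)
  ultimately show False using i by simp
qed

lemma zeros_butlast_last: "ss \<noteq> [] \<Longrightarrow> zeros (Lst ss) = zeros (Lst (butlast ss)) \<union> zeros (last ss)"
proof -
  assume "ss \<noteq> []"
  then have "ss = butlast ss @ [last ss]" by simp
  then have "zeros (Lst ss) = zeros (Lst (butlast ss @ [last ss]))" by simp
  also have "\<dots> = zeros (Lst (butlast ss)) \<union> zeros (last ss)" by auto
  finally show ?thesis .
qed

lemma UT1:
  "wfst n j p s \<Longrightarrow> s \<noteq> Lst [] \<Longrightarrow> m \<le> j \<Longrightarrow>
    zeros (upd_top j m f s) = (zeros s - zeros (top_st j m s)) \<union> zeros (f (top_st j m s))"
proof (induction j arbitrary: p s)
  case 0
  then show ?case by simp
next
  case (Suc j)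
  then obtain ss where s: "s = Lst ss" "ss \<noteq> []" using wf_levelSuc by blast
  note L = top_last_facts[OF Suc.prems(1)[unfolded s(1)] s(2)]
  show ?case
  proof (cases "m = Suc j")
    case True then show ?thesis using s by simp
  next
    case False
    then have m: "m \<le> j" using Suc.prems by simp
    have e: "top_st (Suc j) m s = top_st j m (last ss)" using s m by simp
    have u: "upd_top (Suc j) m f s = Lst (butlast ss @ [upd_top j m f (last ss)])" using s m by simp
    have IH: "zeros (upd_top j m f (last ss)) = (zeros (last ss) - zeros (top_st j m (last ss))) \<union> zeros (f (top_st j m (last ss)))"
      using Suc.IH L m by blast
    have sub: "zeros (top_st j m (last ss)) \<subseteq> zeros (last ss)" using top_wf L m by blast
    have d: "zeros (Lst (butlast ss)) \<inter> zeros (last ss) = {}" using butlast_last_disj Suc.prems(1) s by blast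
    have z1: "zeros (upd_top (Suc j) m f s) = zeros (Lst (butlast ss)) \<union> zeros (upd_top j m f (last ss))"
      using u by (simp add: Un_commute)
    have z2: "zeros s = zeros (Lst (butlast ss)) \<union> zeros (last ss)" using s zeros_butlast_last by simp
    show ?thesis unfolding e z1 z2 IH using sub d by blast
  qed
qed

lemma UT2:
  "wfst n j p s \<Longrightarrow> s \<noteq> Lst [] \<Longrightarrow> m \<le> j \<Longrightarrow>
    top_st j m (upd_top j m f s) = f (top_st j m s)"
proof (induction j arbitrary: p s)
  case 0
  then show ?case by simp
next
  case (Suc j)
  then obtain ss where s: "s = Lst ss" "ss \<noteq> []" using wf_levelSuc by blast
  note L = top_last_facts[OF Suc.prems(1)[unfolded s(1)] s(2)]
  show ?case
  proof (cases "m = Suc j")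
    case True then show ?thesis using s by (simp add: top_self)
  next
    case False
    then have m: "m \<le> j" using Suc.prems by simp
    have "top_st (Suc j) m (upd_top (Suc j) m f s) = top_st j m (upd_top j m f (last ss))" using s m by simp
    moreover have "top_st j m (upd_top j m f (last ss)) = f (top_st j m (last ss))" using Suc.IH L m by blast
    moreover have "top_st (Suc j) m s = top_st j m (last ss)" using s m by simp
    ultimately show ?thesis by simp
  qed
qed

definition tp :: "nat \<Rightarrow> 'g stk \<Rightarrow> nat list" where
  "tp n s = zpos (top_st n 0 s)"

lemma N_top: "nstack n s \<Longrightarrow> m \<le> n \<Longrightarrow>
   wfst n m (take (n-m) (tp n s)) (top_st n m s) \<and> top_st n m s \<noteq> Lst [] \<and> zeros (top_st n m s) \<subseteq> zeros s"
  using top_wf[of n n "[]" s m] unfolding nstack_def tp_def by simp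

lemma N_len: "nstack n s \<Longrightarrow> Zst g x \<in> zeros s \<Longrightarrow> length x = n"
  using wf_zeros[of n n "[]" s g x] unfolding nstack_def by simp

lemma N_tp: "nstack n s \<Longrightarrow> \<exists>g. top_st n 0 s = Zst g (tp n s) \<and> Zst g (tp n s) \<in> zeros s"
  using top_basic[of n n "[]" s] unfolding nstack_def tp_def by auto

lemma N_F1: "nstack n s \<Longrightarrow> m \<le> n \<Longrightarrow> Zst g x \<in> zeros s \<Longrightarrow>
   (Zst g x \<in> zeros (top_st n m s)) = (take (n-m) x = take (n-m) (tp n s))"
  using F1[of n n "[]" s m g x] unfolding nstack_def tp_def by simp

lemma N_F2: "nstack n s \<Longrightarrow> Zst g x \<in> zeros s \<Longrightarrow> l < n \<Longrightarrow>
   take l x = take l (tp n s) \<Longrightarrow> x ! l \<le> tp n s ! l"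
  using F2[of n n "[]" s g x l] unfolding nstack_def tp_def by simp

lemma N_unique: "nstack n s \<Longrightarrow> Zst g x \<in> zeros s \<Longrightarrow> Zst g' x \<in> zeros s \<Longrightarrow> g = g'"
  using wf_unique unfolding nstack_def by metis

lemma top_pred: "top_st (Suc r) r (Lst ss) = last ss"
  by (simp add: top_self)

lemma POP:
  assumes "nstack n s" "1 \<le> r" "r \<le> n" "pop_st n r s = Some s'"
  shows "zeros s' = zeros s - zeros (top_st n (r-1) s)"
proof -
  obtain ss where ss: "top_st n r s = Lst ss" "2 \<le> length ss" "s' = upd_top n r (\<lambda>_. Lst (butlast ss)) s"
    using assms(4) unfolding pop_st_def by (auto split: stk.splits if_splits)
  have W: "wfst n r (take (n-r) (tp n s)) (Lst ss)" "zeros (Lst ss) \<subseteq> zeros s"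
    using N_top[OF assms(1) assms(3)] ss(1) by auto
  obtain r' where r': "r = Suc r'" using assms(2) by (cases r) auto
  have t1: "top_st n (r-1) s = last ss"
    using top_comp[of "r-1" r n s] assms ss(1) r' top_pred by simp
  have z1: "zeros s' = (zeros s - zeros (Lst ss)) \<union> zeros (Lst (butlast ss))"
    using UT1[of n n "[]" s r "\<lambda>_. Lst (butlast ss)"] assms(1,3) ss unfolding nstack_def by simp
  have ne: "ss \<noteq> []" using ss(2) by auto
  have d: "zeros (Lst (butlast ss)) \<inter> zeros (last ss) = {}" using butlast_last_disj[of n r' "take (n-r) (tp n s)" ss] W(1) r' ne by blast
  have z2: "zeros (Lst ss) = zeros (Lst (butlast ss)) \<union> zeros (last ss)" using zeros_butlast_last ne by blast
  show ?thesis unfolding z1 t1 using z2 d W(2) by blast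
qed

lemma zeros_map_pos: "Zst g x \<in> zeros (map_pos f u) \<longleftrightarrow> (\<exists>y. x = f y \<and> Zst g y \<in> zeros u)"
  by (induction u) auto

lemma zeros_set_top_sym:
  assumes "wfst n m q u" "u \<noteq> Lst []"
  shows "Zst g y \<in> zeros (set_top_sym m \<gamma> u) \<longleftrightarrow>
     (\<exists>g0. Zst g0 y \<in> zeros u \<and> g = (if y = zpos (top_st m 0 u) then \<gamma> else g0))"
proof -
  obtain gt tt where t: "top_st m 0 u = Zst gt tt" "Zst gt tt \<in> zeros u" using top_basic assms by blast
  have z: "zeros (set_top_sym m \<gamma> u) = (zeros u - {Zst gt tt}) \<union> {Zst \<gamma> tt}"
    unfolding set_top_sym_def using UT1[OF assms, of 0] t by simp
  show ?thesis
  proof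
    assume "Zst g y \<in> zeros (set_top_sym m \<gamma> u)"
    then have "(Zst g y \<in> zeros u \<and> Zst g y \<noteq> Zst gt tt) \<or> (g = \<gamma> \<and> y = tt)" using z by auto
    then show "\<exists>g0. Zst g0 y \<in> zeros u \<and> g = (if y = zpos (top_st m 0 u) then \<gamma> else g0)"
    proof
      assume a: "Zst g y \<in> zeros u \<and> Zst g y \<noteq> Zst gt tt"
      then have "y \<noteq> tt" using wf_unique[OF assms(1) _ t(2)] by blast
      then show ?thesis using a t by auto
    next
      assume "g = \<gamma> \<and> y = tt" then show ?thesis using t by auto
    qed
  next
    assume "\<exists>g0. Zst g0 y \<in> zeros u \<and> g = (if y = zpos (top_st m 0 u) then \<gamma> else g0)"
    then obtain g0 where g0: "Zst g0 y \<in> zeros u" "g = (if y = tt then \<gamma> else g0)" using t by auto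
    then show "Zst g y \<in> zeros (set_top_sym m \<gamma> u)" using z by (cases "y = tt") auto
  qed
qed

definition incp :: "nat \<Rightarrow> nat \<Rightarrow> nat list \<Rightarrow> nat list" where
  "incp n r y = y[n - r := Suc (y ! (n - r))]"

lemma PUSH:
  assumes "nstack n s" "1 \<le> r" "r \<le> n" "s' = push_st n r \<gamma> s"
  shows "zeros s' = zeros s \<union> zeros (top_st n (r-1) s')"
    and "Zst g x \<in> zeros (top_st n (r-1) s') \<longleftrightarrow>
          (\<exists>g0 y. Zst g0 y \<in> zeros (top_st n (r-1) s) \<and> x = incp n r y \<and> g = (if y = tp n s then \<gamma> else g0))"
proof -
  obtain r' where r': "r = Suc r'" using assms(2) by (cases r) auto
  have W: "wfst n r (take (n-r) (tp n s)) (top_st n r s)" "top_st n r s \<noteq> Lst []" "zeros (top_st n r s) \<subseteq> zeros s"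
    using N_top[OF assms(1) assms(3)] by auto
  then obtain ss where ss: "top_st n r s = Lst ss" "ss \<noteq> []" using wf_levelSuc r' by (metis)
  define F where "F = (\<lambda>t. case t of
       Lst ss \<Rightarrow> Lst (ss @ [map_pos (\<lambda>x. x[n - r := Suc (x ! (n - r))])
                                  (set_top_sym (r - 1) \<gamma> (last ss))])
     | Zst g x \<Rightarrow> Zst g x)"
  define new where "new = map_pos (incp n r) (set_top_sym (r - 1) \<gamma> (last ss))"
  have s': "s' = upd_top n r F s" using assms(4) unfolding push_st_def F_def by simp
  have Fss: "F (Lst ss) = Lst (ss @ [new])" unfolding F_def new_def incp_def by simp
  have ts': "top_st n r s' = Lst (ss @ [new])"
    using UT2[of n n "[]" s r F] assms(1,3) s' ss(1) Fss unfolding nstack_def by simp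
  have tnew: "top_st n (r-1) s' = new"
    using top_comp[of "r-1" r n s'] assms(3) ts' r' top_pred top_self by simp
  have z1: "zeros s' = (zeros s - zeros (Lst ss)) \<union> zeros (Lst (ss @ [new]))"
    using UT1[of n n "[]" s r F] assms(1,3) s' ss(1) Fss unfolding nstack_def by simp
  show "zeros s' = zeros s \<union> zeros (top_st n (r-1) s')"
    unfolding z1 tnew using W(3) ss(1) by auto
  have t1: "top_st n (r-1) s = last ss"
    using top_comp[of "r-1" r n s] assms ss(1) r' top_pred by simp
  have W1: "wfst n (r-1) (take (n-(r-1)) (tp n s)) (last ss)" "last ss \<noteq> Lst []"
  proof -
    have "r - 1 \<le> n" using assms by simp
    from N_top[OF assms(1) this] t1 show "wfst n (r-1) (take (n-(r-1)) (tp n s)) (last ss)" "last ss \<noteq> Lst []" by auto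
  qed
  have tt: "zpos (top_st (r-1) 0 (last ss)) = tp n s"
  proof -
    have "r - 1 \<le> n" using assms by simp
    then show ?thesis using top_comp[of 0 "r-1" n s] t1 unfolding tp_def by simp
  qed
  show "Zst g x \<in> zeros (top_st n (r-1) s') \<longleftrightarrow>
          (\<exists>g0 y. Zst g0 y \<in> zeros (top_st n (r-1) s) \<and> x = incp n r y \<and> g = (if y = tp n s then \<gamma> else g0))"
    unfolding tnew new_def zeros_map_pos t1 zeros_set_top_sym[OF W1] tt by blast
qed

lemma PUSH_disj:
  assumes "nstack n s" "1 \<le> r" "r \<le> n" "Zst g0 y \<in> zeros (top_st n (r-1) s)"
  shows "Zst g' (incp n r y) \<notin> zeros s"
proof
  assume a: "Zst g' (incp n r y) \<in> zeros s"
  have "r - 1 \<le> n" using assms by simp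
  from N_top[OF assms(1) this] have ys: "Zst g0 y \<in> zeros s" using assms(4) by auto
  have ly: "length y = n" using N_len[OF assms(1) ys] .
  have tk: "take (n - (r-1)) y = take (n - (r-1)) (tp n s)" using N_F1[OF assms(1) \<open>r - 1 \<le> n\<close> ys] assms(4) by simp
  have nr: "n - r < n" "n - (r-1) = Suc (n - r)" using assms(2,3) by auto
  have e1: "y ! (n-r) = tp n s ! (n-r)" using take_eq_nth[OF tk, of "n-r"] nr ly
    by (metis N_len N_tp assms(1) lessI)
  have tk2: "take (n-r) (incp n r y) = take (n-r) (tp n s)"
  proof -
    have "take (n-r) (incp n r y) = take (n-r) y" unfolding incp_def by simp
    also have "\<dots> = take (n-r) (take (n - (r-1)) y)" using nr by simp
    also have "\<dots> = take (n-r) (tp n s)" using tk nr by (metis min.absorb1 le_SucI order_refl take_take)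
    finally show ?thesis .
  qed
  have "incp n r y ! (n-r) \<le> tp n s ! (n-r)" using N_F2[OF assms(1) a nr(1) tk2] .
  moreover have "incp n r y ! (n-r) = Suc (y ! (n-r))" unfolding incp_def using nr ly by simp
  ultimately show False using e1 by simp
qed

lemma take_app_cons: "length b = L \<Longrightarrow> take (Suc L) (b @ j # rest) = b @ [j]"
  by simp

lemma take_app_le: "length b = L \<Longrightarrow> m \<le> L \<Longrightarrow> take m (b @ rest) = take m b"
  by simp

lemma split_pos: "take (Suc L) x = b @ [d] \<Longrightarrow> length b = L \<Longrightarrow> Suc L \<le> length x \<Longrightarrow> x = b @ d # drop (Suc L) x"
  by (metis append_Cons append_assoc append_take_drop_id self_append_conv2)

lemma NOTTOP:
  assumes "nstack n s" "1 \<le> k" "k \<le> n" "length \<beta> = n - k" "Zst g0 x0 \<in> zeros s"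
    "take (Suc (n-k)) x0 = \<beta> @ [d]" "Zst g0 x0 \<notin> zeros (top_st n (k-1) s)" "j \<le> d"
  shows "\<beta> @ [j] \<noteq> take (Suc (n-k)) (tp n s)"
proof
  assume a: "\<beta> @ [j] = take (Suc (n-k)) (tp n s)"
  have nk: "n - (k-1) = Suc (n-k)" "k - 1 \<le> n" using assms(2,3) by auto
  have lx: "length x0 = n" using N_len[OF assms(1,5)] .
  have lt: "length (tp n s) = n" using N_tp[OF assms(1)] N_len[OF assms(1)] by metis
  show False
  proof (cases "j = d")
    case True
    then have "take (n - (k-1)) x0 = take (n - (k-1)) (tp n s)" using a assms(6) nk by simp
    then show False using N_F1[OF assms(1) nk(2) assms(5)] assms(7) by simp
  next
    case False
    have tb: "take (n-k) (tp n s) = \<beta>" using a assms(4) by (metis butlast_snoc butlast_take diff_Suc_1 lt Suc_leI diff_less assms(2) assms(3) le_trans zero_less_one less_le_trans order_refl)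
    have tj: "tp n s ! (n-k) = j" using a assms(4) lt assms(2,3) by (metis nth_append_length nth_take lessI)
    have "take (n-k) x0 = \<beta>" using assms(6) assms(4) by (metis butlast_snoc butlast_take diff_Suc_1 lx Suc_leI diff_less assms(2) assms(3) le_trans zero_less_one less_le_trans order_refl)
    then have "x0 ! (n-k) \<le> tp n s ! (n-k)" using N_F2[OF assms(1,5), of "n-k"] tb assms(2,3) by simp
    moreover have "x0 ! (n-k) = d" using assms(6) assms(4) lx assms(2,3) by (metis nth_append_length nth_take lessI)
    ultimately show False using tj False assms(8) by simp
  qed
qed

lemma TK: "take (Suc L) x = b @ [d] \<Longrightarrow> length b = L \<Longrightarrow> L < length x \<Longrightarrow> take L x = b \<and> x ! L = d"
  by (metis butlast_snoc butlast_take diff_Suc_1 Suc_leI nth_append_length nth_take lessI)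

lemma ABOVE:
  assumes "nstack n s" "Zst g0 x0 \<in> zeros s" "take (Suc L) x0 = \<beta> @ [d]" "length \<beta> = L" "L < n" "j \<le> d"
  shows "\<beta> @ [j] \<noteq> take L (tp n s) @ [Suc (tp n s ! L)]"
proof
  assume a: "\<beta> @ [j] = take L (tp n s) @ [Suc (tp n s ! L)]"
  have lx: "length x0 = n" using N_len[OF assms(1,2)] .
  from TK[OF assms(3,4)] lx assms(5) have "take L x0 = \<beta>" "x0 ! L = d" by auto
  moreover have "\<beta> = take L (tp n s)" "j = Suc (tp n s ! L)" using a by auto
  ultimately have "d \<le> tp n s ! L" using N_F2[OF assms(1,2,5)] by simp
  then show False using assms(6) \<open>j = Suc (tp n s ! L)\<close> by simp
qed

definition corr :: "nat \<Rightarrow> nat list \<Rightarrow> nat \<Rightarrow> 'g stk \<Rightarrow> 'g stk \<Rightarrow> (nat list \<Rightarrow> nat list) \<Rightarrow> nat list \<Rightarrow> bool" where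
  "corr L \<beta> d s' s b \<beta>0 = (length \<beta>0 = L \<and> (\<forall>j rest g. j \<le> d \<longrightarrow>
      (Zst g (\<beta> @ j # rest) \<in> zeros s') = (Zst g (\<beta>0 @ j # rest) \<in> zeros s) \<and>
      (Zst g (\<beta> @ j # rest) \<in> zeros s' \<longrightarrow> b (\<beta> @ j # rest) = \<beta>0 @ j # rest)))"

lemma STEP_POP:
  assumes "nstack n s" "1 \<le> k" "k \<le> n" "length \<beta> = n - k" "1 \<le> r" "r \<le> n"
    "pop_st n r s = Some s'" "Zst g0 x0 \<in> zeros s'" "take (Suc (n-k)) x0 = \<beta> @ [d]"
    "Zst g0 x0 \<notin> zeros (top_st n (k-1) s)"
  shows "corr (n-k) \<beta> d s' s id \<beta>"
proof -
  have Z: "zeros s' = zeros s - zeros (top_st n (r-1) s)" using POP[OF assms(1,5,6,7)] .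
  have x0s: "Zst g0 x0 \<in> zeros s" using Z assms(8) by auto
  have rn: "r - 1 \<le> n" using assms by simp
  have lx0: "length x0 = n" using N_len[OF assms(1) x0s] .
  have "Zst g (\<beta> @ j # rest) \<notin> zeros (top_st n (r-1) s)" if j: "j \<le> d" and xs: "Zst g (\<beta> @ j # rest) \<in> zeros s" for j rest g
  proof
    assume a: "Zst g (\<beta> @ j # rest) \<in> zeros (top_st n (r-1) s)"
    then have tk: "take (n - (r-1)) (\<beta> @ j # rest) = take (n - (r-1)) (tp n s)" using N_F1[OF assms(1) rn xs] by simp
    show False
    proof (cases "r \<le> k")
      case True
      then have "Suc (n-k) \<le> n - (r-1)" using assms by simp
      then have "take (Suc (n-k)) (\<beta> @ j # rest) = take (Suc (n-k)) (tp n s)" using tk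
        by (metis min.absorb1 take_take)
      then have "\<beta> @ [j] = take (Suc (n-k)) (tp n s)" using assms(4) by simp
      then show False using NOTTOP[OF assms(1,2,3,4) x0s assms(9,10) j] by simp
    next
      case False
      then have le: "n - (r-1) \<le> n - k" using assms by simp
      have "take (n - (r-1)) x0 = take (n - (r-1)) (\<beta> @ j # rest)"
      proof -
        have "take (n - (r-1)) x0 = take (n - (r-1)) (take (n-k) x0)" using le by (simp add: min.absorb1)
        also have "\<dots> = take (n - (r-1)) \<beta>" using TK[OF assms(9,4)] lx0 assms(2,3) by simp
        also have "\<dots> = take (n - (r-1)) (\<beta> @ j # rest)" using le assms(4) by simp
        finally show ?thesis .
      qed
      then have "Zst g0 x0 \<in> zeros (top_st n (r-1) s)" using N_F1[OF assms(1) rn x0s] tk by simp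
      then show False using Z assms(8) by simp
    qed
  qed
  then show ?thesis unfolding corr_def using Z assms(4) by auto
qed

definition decp :: "nat \<Rightarrow> nat \<Rightarrow> nat list \<Rightarrow> nat list" where
  "decp n r y = y[n - r := y ! (n - r) - 1]"

lemma decp_incp: "decp n r (incp n r y) = y"
  unfolding decp_def incp_def by (cases "n - r < length y") (auto simp: list_update_beyond)

lemma incp_app: "n - r < length b \<Longrightarrow> incp n r (b @ z) = incp n r b @ z"
  unfolding incp_def by (simp add: list_update_append1 nth_append)

lemma length_incp[simp]: "length (incp n r y) = length y"
  unfolding incp_def by simp

lemma take_incp: "m \<le> n - r \<Longrightarrow> take m (incp n r y) = take m y"
  unfolding incp_def by simp

lemma nth_incp: "n - r < length y \<Longrightarrow> incp n r y ! (n - r) = Suc (y ! (n - r))"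
  unfolding incp_def by simp

lemma take_incp2: "n - r < m \<Longrightarrow> take m (incp n r y) = incp n r (take m y)"
  unfolding incp_def by (simp add: take_update_swap)

lemma pos_iff: "x \<in> positions u \<longleftrightarrow> (\<exists>g. Zst g x \<in> zeros u)"
  unfolding positions_def using zeros_Zst by force

lemma take_le_eq: "take m x = take m y \<Longrightarrow> m' \<le> m \<Longrightarrow> take m' x = take m' y"
  by (metis min.absorb1 take_take)

lemma STEP_PUSH:
  assumes ns: "nstack n s" and ns': "nstack n s'" and k: "1 \<le> k" "k \<le> n" and lb: "length \<beta> = n - k"
    and r: "1 \<le> r" "r \<le> n" and s': "s' = push_st n r \<gamma> s"
    and x0: "Zst g0 x0 \<in> zeros s'" "take (Suc (n-k)) x0 = \<beta> @ [d]"
    and b: "b = (\<lambda>x. if x \<in> positions (top_st n (r-1) s') then decp n r x else x)"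
    and H: "\<forall>g. Zst g (b x0) \<notin> zeros (top_st n (k-1) s)"
  shows "\<exists>\<beta>0. corr (n-k) \<beta> d s' s b \<beta>0"
proof -
  define L where "L = n - k"
  define NEW where "NEW = zeros (top_st n (r-1) s')"
  define T1 where "T1 = zeros (top_st n (r-1) s)"
  have PA: "zeros s' = zeros s \<union> NEW" using PUSH(1)[OF ns r s'] unfolding NEW_def .
  have PB: "\<And>g x. Zst g x \<in> NEW \<longleftrightarrow> (\<exists>g1 y. Zst g1 y \<in> T1 \<and> x = incp n r y \<and> g = (if y = tp n s then \<gamma> else g1))"
    using PUSH(2)[OF ns r s'] unfolding NEW_def T1_def by blast
  have rn: "r - 1 \<le> n" "n - (r-1) = Suc (n - r)" "n - r < n" "Suc n - r = Suc (n - r)" using r by auto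
  have kn: "k - 1 \<le> n" "n - (k-1) = Suc L" "L < n" using k unfolding L_def by auto
  have T1s: "T1 \<subseteq> zeros s" using N_top[OF ns rn(1)] unfolding T1_def by auto
  have T1F: "\<And>g y. Zst g y \<in> T1 \<longleftrightarrow> Zst g y \<in> zeros s \<and> take (Suc (n-r)) y = take (Suc (n-r)) (tp n s)"
    using N_F1[OF ns rn(1)] T1s rn(2,4) unfolding T1_def by auto
  have NEWF: "\<And>g y. Zst g y \<in> zeros s' \<Longrightarrow> Zst g y \<in> NEW \<longleftrightarrow> take (Suc (n-r)) y = take (Suc (n-r)) (tp n s')"
    using N_F1[OF ns' rn(1)] rn(2,4) unfolding NEW_def by auto
  have bpos: "\<And>x. b x = (if (\<exists>g. Zst g x \<in> NEW) then decp n r x else x)" using b pos_iff unfolding NEW_def by auto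
  have lx0: "length x0 = n" using N_len[OF ns' x0(1)] .
  have x0s: "x0 = \<beta> @ d # drop (Suc L) x0" using split_pos[OF x0(2) lb] lx0 kn unfolding L_def by simp
  have lbL: "length \<beta> = L" using lb unfolding L_def .
  show ?thesis
  proof (cases "r \<le> k")
    case True
    have C1: "\<not> (\<exists>g. Zst g x0 \<in> NEW)"
    proof
      assume "\<exists>g. Zst g x0 \<in> NEW"
      then obtain g1 y where y: "Zst g1 y \<in> T1" "x0 = incp n r y" using PB by blast
      then have bx: "b x0 = y" using bpos \<open>\<exists>g. Zst g x0 \<in> NEW\<close> decp_incp by simp
      have "take (Suc L) y = take (Suc L) (tp n s)"
        using T1F[of g1 y] y(1) take_le_eq[of "Suc (n-r)" y "tp n s" "Suc L"] True unfolding L_def by auto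
      then have "Zst g1 y \<in> zeros (top_st n (k-1) s)" using N_F1[OF ns kn(1)] T1s y(1) kn(2) by auto
      then show False using H bx by simp
    qed
    then have bx0: "b x0 = x0" using bpos by simp
    have x0z: "Zst g0 x0 \<in> zeros s" using PA x0(1) C1 by auto
    have H0: "Zst g0 x0 \<notin> zeros (top_st n (k-1) s)" using H bx0 by simp
    have C2: "\<not> (\<exists>g'. Zst g' (\<beta> @ j # rest) \<in> NEW)" if j: "j \<le> d" for j rest
    proof
      assume "\<exists>g'. Zst g' (\<beta> @ j # rest) \<in> NEW"
      then obtain g1 y where y: "Zst g1 y \<in> T1" "\<beta> @ j # rest = incp n r y" using PB by blast
      have ly: "length y = n" using N_len[OF ns] y(1) T1s by blast
      have ty: "take (Suc (n-r)) y = take (Suc (n-r)) (tp n s)" using T1F y(1) by blast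
      show False
      proof (cases "r = k")
        case True
        have a1: "take L (\<beta> @ j # rest) = \<beta>" using lbL by simp
        have a2: "(\<beta> @ j # rest) ! L = j" using lbL by (simp add: nth_append)
        have "take L (incp n r y) = take L (tp n s)"
          using take_incp[of L n r y] True ty take_le_eq[of "Suc (n-r)" y "tp n s" L] unfolding L_def by simp
        moreover have "incp n r y ! L = Suc (tp n s ! L)"
          using nth_incp[of n r y] True ly kn(3) ty take_eq_nth[of "Suc (n-r)" y "tp n s" "n-r"] N_len[OF ns] N_tp[OF ns]
          unfolding L_def by (metis lessI)
        ultimately have "\<beta> @ [j] = take L (tp n s) @ [Suc (tp n s ! L)]" using y(2) a1 a2 by metis
        then show False using ABOVE[OF ns x0z _ lbL kn(3) j] x0(2) unfolding L_def by simp
      next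
        case False
        then have "Suc L \<le> n - r" using \<open>r \<le> k\<close> k r unfolding L_def by simp
        then have "take (Suc L) (incp n r y) = take (Suc L) (tp n s)"
          using take_incp[of "Suc L" n r y] ty take_le_eq[of "Suc (n-r)" y "tp n s" "Suc L"] by simp
        then have "\<beta> @ [j] = take (Suc (n-k)) (tp n s)" using y(2) lbL unfolding L_def by (metis take_app_cons)
        then show False using NOTTOP[OF ns k lb x0z x0(2) H0 j] by simp
      qed
    qed
    have "corr (n-k) \<beta> d s' s b \<beta>"
      unfolding corr_def using C2 PA bpos lb by auto
    then show ?thesis by blast
  next
    case False
    then have rk: "n - r < L" "Suc (n-r) \<le> L" using k r unfolding L_def by auto
    show ?thesis
    proof (cases "\<exists>g. Zst g x0 \<in> NEW")
      case True
      then obtain g' where g': "Zst g' x0 \<in> NEW" by blast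
      then obtain g1 y0 where y0: "Zst g1 y0 \<in> T1" "x0 = incp n r y0" using PB by blast
      have bx: "b x0 = y0" using bpos True y0 decp_incp by simp
      have ly0: "length y0 = n" using N_len[OF ns] y0(1) T1s by blast
      define \<beta>0 where "\<beta>0 = take L y0"
      have lb0: "length \<beta>0 = L" using ly0 kn unfolding \<beta>0_def by simp
      have "incp n r y0 = incp n r \<beta>0 @ drop L y0"
        using incp_app[of n r \<beta>0 "drop L y0"] lb0 rk unfolding \<beta>0_def by simp
      then have "\<beta> @ d # drop (Suc L) x0 = incp n r \<beta>0 @ drop L y0" using x0s y0(2) by metis
      then have eb: "\<beta> = incp n r \<beta>0" and dy: "drop L y0 = d # drop (Suc L) x0" using lbL lb0 by auto
      have y0e: "y0 = \<beta>0 @ d # drop (Suc L) x0" using dy unfolding \<beta>0_def by (metis append_take_drop_id)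
      have y0z: "Zst g1 y0 \<in> zeros s" using y0(1) T1s by blast
      have H1: "Zst g1 y0 \<notin> zeros (top_st n (k-1) s)" using H bx by simp
      have ty0: "take (Suc L) y0 = \<beta>0 @ [d]" using y0e lb0 by simp
      have ty0r: "take (Suc (n-r)) y0 = take (Suc (n-r)) (tp n s)" using T1F y0(1) by blast
      have xe: "\<beta> @ j # rest = incp n r (\<beta>0 @ j # rest)" for j rest
        using eb incp_app[of n r \<beta>0 "j # rest"] lb0 rk by simp
      have nt: "\<beta>0 @ j # rest \<noteq> tp n s" if "j \<le> d" for j rest
      proof
        assume "\<beta>0 @ j # rest = tp n s"
        then have "\<beta>0 @ [j] = take (Suc (n-k)) (tp n s)" using lb0 unfolding L_def by (metis take_app_cons)
        then show False using NOTTOP[OF ns k _ y0z _ H1 that] lb0 ty0 unfolding L_def by simp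
      qed
      have inT1: "Zst g (\<beta>0 @ j # rest) \<in> T1 \<longleftrightarrow> Zst g (\<beta>0 @ j # rest) \<in> zeros s" for g j rest
      proof -
        have "take (Suc (n-r)) (\<beta>0 @ j # rest) = take (Suc (n-r)) \<beta>0" using lb0 rk by simp
        also have "\<dots> = take (Suc (n-r)) y0" using rk unfolding \<beta>0_def by simp
        finally show ?thesis using T1F ty0r by auto
      qed
      have inNEW: "Zst g (\<beta> @ j # rest) \<in> zeros s' \<Longrightarrow> Zst g (\<beta> @ j # rest) \<in> NEW" for g j rest
      proof -
        assume a: "Zst g (\<beta> @ j # rest) \<in> zeros s'"
        have "take (Suc (n-r)) (\<beta> @ j # rest) = take (Suc (n-r)) x0" using x0s lbL rk by (metis take_app_le)
        moreover have "take (Suc (n-r)) x0 = take (Suc (n-r)) (tp n s')" using NEWF[of g' x0] g' PA by blast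
        ultimately show ?thesis using NEWF[OF a] by simp
      qed
      have "corr (n-k) \<beta> d s' s b \<beta>0"
        unfolding corr_def
      proof (intro conjI allI impI)
        show "length \<beta>0 = n - k" using lb0 unfolding L_def .
        fix j rest g assume j: "j \<le> d"
        show "(Zst g (\<beta> @ j # rest) \<in> zeros s') = (Zst g (\<beta>0 @ j # rest) \<in> zeros s)"
        proof
          assume a: "Zst g (\<beta> @ j # rest) \<in> zeros s'"
          then obtain g2 y where y: "Zst g2 y \<in> T1" "\<beta> @ j # rest = incp n r y" "g = (if y = tp n s then \<gamma> else g2)"
            using inNEW PB by blast
          have "y = \<beta>0 @ j # rest" using y(2) xe decp_incp by metis
          then show "Zst g (\<beta>0 @ j # rest) \<in> zeros s" using y nt j T1s by auto
        next
          assume a: "Zst g (\<beta>0 @ j # rest) \<in> zeros s"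
          then have "Zst g (\<beta>0 @ j # rest) \<in> T1" using inT1 by blast
          then have "Zst g (\<beta> @ j # rest) \<in> NEW" using PB xe nt j by fastforce
          then show "Zst g (\<beta> @ j # rest) \<in> zeros s'" using PA by blast
        qed
        assume "Zst g (\<beta> @ j # rest) \<in> zeros s'"
        then have "Zst g (\<beta> @ j # rest) \<in> NEW" using inNEW by blast
        then show "b (\<beta> @ j # rest) = \<beta>0 @ j # rest" using bpos xe decp_incp by auto
      qed
      then show ?thesis by blast
    next
      case False
      have C: "\<not> (\<exists>g'. Zst g' (\<beta> @ j # rest) \<in> NEW)" for j rest
      proof
        assume "\<exists>g'. Zst g' (\<beta> @ j # rest) \<in> NEW"
        then obtain g' where a: "Zst g' (\<beta> @ j # rest) \<in> NEW" by blast
        have "take (Suc (n-r)) (\<beta> @ j # rest) = take (Suc (n-r)) x0" using x0s lbL rk by (metis take_app_le)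
        moreover have "take (Suc (n-r)) (\<beta> @ j # rest) = take (Suc (n-r)) (tp n s')" using NEWF[of g'] a PA by blast
        ultimately have "Zst g0 x0 \<in> NEW" using NEWF[OF x0(1)] by simp
        then show False using False by blast
      qed
      have "corr (n-k) \<beta> d s' s b \<beta>"
        unfolding corr_def using C PA bpos lb by auto
      then show ?thesis by blast
    qed
  qed
qed

lemma STEP:
  assumes dp: "dpda n \<delta>" and st: "step n \<delta> c c'" and ns: "nstack n (snd c)" and ns': "nstack n (snd c')"
    and k: "1 \<le> k" "k \<le> n" and lb: "length \<beta> = n - k"
    and x0: "Zst g0 x0 \<in> zeros (snd c')" "take (Suc (n-k)) x0 = \<beta> @ [d]"
    and H: "\<forall>g. Zst g (back_pos n \<delta> c c' x0) \<notin> zeros (top_st n (k-1) (snd c))"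
  shows "\<exists>\<beta>0. corr (n-k) \<beta> d (snd c') (snd c) (back_pos n \<delta> c c') \<beta>0"
proof (cases "\<delta> (fst c) (top_sym n (snd c))")
  case (Read f)
  then have "snd c' = snd c" using st unfolding step_def by simp
  moreover have "back_pos n \<delta> c c' = id" using Read unfolding back_pos_def by auto
  ultimately have "corr (n-k) \<beta> d (snd c') (snd c) (back_pos n \<delta> c c') \<beta>" unfolding corr_def using lb by simp
  then show ?thesis by blast
next
  case (Op p op)
  note dpo = dp[unfolded dpda_def, rule_format, of "fst c" "top_sym n (snd c)", unfolded Op]
  show ?thesis
  proof (cases op)
    case (Pop r)
    have r: "1 \<le> r" "r \<le> n" using dpo Pop by auto
    have ps: "pop_st n r (snd c) = Some (snd c')" using st Op Pop unfolding step_def by simp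
    have bb: "back_pos n \<delta> c c' = id" using Op Pop unfolding back_pos_def by auto
    have "corr (n-k) \<beta> d (snd c') (snd c) id \<beta>"
      using STEP_POP[OF ns k lb r ps x0] H bb by simp
    then show ?thesis using bb by auto
  next
    case (Push r \<gamma>)
    have r: "1 \<le> r" "r \<le> n" using dpo Push by auto
    have ps: "snd c' = push_st n r \<gamma> (snd c)" using st Op Push unfolding step_def by simp
    have bb: "back_pos n \<delta> c c' = (\<lambda>x. if x \<in> positions (top_st n (r-1) (snd c')) then decp n r x else x)"
      using Op Push unfolding back_pos_def decp_def by auto
    show ?thesis using STEP_PUSH[OF ns ns' k lb r ps x0 bb] H bb by simp
  qed
qed

lemma corr_comp: "corr L \<beta> d s2 s1 b1 \<beta>1 \<Longrightarrow> corr L \<beta>1 d s1 s0 b0 \<beta>0 \<Longrightarrow> corr L \<beta> d s2 s0 (b0 \<circ> b1) \<beta>0"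
  unfolding corr_def by auto

lemma hpos_prefix: "i < length R \<Longrightarrow> hpos n \<delta> (R @ S) i x = hpos n \<delta> R i x"
proof (induction i arbitrary: x)
  case 0 then show ?case by simp
next
  case (Suc i)
  then show ?case by (simp add: nth_append)
qed

lemma hpos_snoc: "R \<noteq> [] \<Longrightarrow> hpos n \<delta> (R @ [c]) (length R) x = hpos n \<delta> R (length R - 1) (back_pos n \<delta> (last R) c x)"
proof -
  assume "R \<noteq> []"
  then obtain m where m: "length R = Suc m" by (cases R) auto
  have "hpos n \<delta> (R @ [c]) (Suc m) x = hpos n \<delta> (R @ [c]) m (back_pos n \<delta> ((R @ [c]) ! m) ((R @ [c]) ! Suc m) x)" by simp
  also have "\<dots> = hpos n \<delta> R m (back_pos n \<delta> (R ! m) c x)" using hpos_prefix[of m R n \<delta> "[c]"] m by (simp add: nth_append)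
  finally show ?thesis using m \<open>R \<noteq> []\<close> by (simp add: last_conv_nth)
qed

lemma run_snoc: "is_run n \<delta> (R @ [c]) \<Longrightarrow> R \<noteq> [] \<Longrightarrow>
   is_run n \<delta> R \<and> step n \<delta> (last R) c \<and> nstack n (snd c) \<and> nstack n (snd (last R))"
proof -
  assume a: "is_run n \<delta> (R @ [c])" "R \<noteq> []"
  have al: "\<forall>i. Suc i < length (R@[c]) \<longrightarrow> step n \<delta> ((R@[c])!i) ((R@[c])!Suc i)"
    and ns: "\<forall>c'\<in>set (R@[c]). nstack n (snd c')" using a(1) unfolding is_run_def by blast+
  have 1: "is_run n \<delta> R" unfolding is_run_def
  proof (intro conjI allI impI ballI)
    show "R \<noteq> []" using a(2) .
    fix c' assume "c' \<in> set R" then show "nstack n (snd c')" using ns by simp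
  next
    fix i assume i: "Suc i < length R"
    have "Suc i < length (R@[c])" using i by simp
    then have "step n \<delta> ((R@[c])!i) ((R@[c])!Suc i)" using al by blast
    then show "step n \<delta> (R!i) (R!Suc i)" using i by (simp add: nth_append)
  qed
  obtain m where m: "length R = Suc m" using a(2) by (cases R) auto
  have "Suc m < length (R@[c])" using m by simp
  then have "step n \<delta> ((R@[c]) ! m) ((R@[c]) ! Suc m)" using al by blast
  moreover have "(R@[c]) ! m = last R" using m a(2) by (simp add: nth_append last_conv_nth)
  moreover have "(R@[c]) ! Suc m = c" using m by (simp add: nth_append)
  ultimately have 2: "step n \<delta> (last R) c" by simp
  have 3: "nstack n (snd c)" "nstack n (snd (last R))" using ns a(2) by simp_all
  show ?thesis using 1 2 3 by blast
qed

lemma CORE: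
  assumes dp: "dpda n \<delta>" and k: "1 \<le> k" "k \<le> n"
  shows "is_run n \<delta> R \<Longrightarrow> length \<beta> = n - k \<Longrightarrow>
    (\<forall>i < length R - 1. \<exists>g x. Zst g x \<in> zeros (snd (last R)) \<and> take (Suc (n-k)) x = \<beta> @ [d] \<and>
        (\<forall>g'. Zst g' (hpos n \<delta> (drop i R) (length R - 1 - i) x) \<notin> zeros (top_st n (k-1) (snd (R ! i))))) \<Longrightarrow>
    \<exists>\<beta>0. corr (n-k) \<beta> d (snd (last R)) (snd (hd R)) (hpos n \<delta> R (length R - 1)) \<beta>0"
proof (induction R arbitrary: \<beta> rule: rev_induct)
  case Nil
  then show ?case unfolding is_run_def by simp
next
  case (snoc c R)
  show ?case
  proof (cases "R = []")
    case True
    then have "corr (n-k) \<beta> d (snd (last (R @ [c]))) (snd (hd (R @ [c]))) (hpos n \<delta> (R @ [c]) (length (R @ [c]) - 1)) \<beta>"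
      unfolding corr_def using snoc.prems(2) by simp
    then show ?thesis by blast
  next
    case False
    note RS = run_snoc[OF snoc.prems(1) False]
    define N where "N = length R"
    have N1: "N \<ge> 1" using False unfolding N_def by (cases R) auto
    have dN: "drop (N-1) (R @ [c]) = [last R, c]" using False unfolding N_def
      by (cases R rule: rev_exhaust) auto
    obtain g x0 where x0: "Zst g x0 \<in> zeros (snd c)" "take (Suc (n-k)) x0 = \<beta> @ [d]"
       "\<forall>g'. Zst g' (hpos n \<delta> (drop (N-1) (R@[c])) (length (R@[c]) - 1 - (N-1)) x0) \<notin> zeros (top_st n (k-1) (snd ((R@[c]) ! (N-1))))"
    proof -
      have "N - 1 < length (R@[c]) - 1" using N1 unfolding N_def by simp
      from snoc.prems(3)[rule_format, OF this] obtain g x where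
        gx: "Zst g x \<in> zeros (snd (last (R@[c])))" "take (Suc (n-k)) x = \<beta> @ [d]"
        "\<forall>g'. Zst g' (hpos n \<delta> (drop (N-1) (R@[c])) (length (R@[c]) - 1 - (N-1)) x) \<notin> zeros (top_st n (k-1) (snd ((R@[c]) ! (N-1))))"
        by blast
      have "Zst g x \<in> zeros (snd c)" using gx(1) by simp
      from that[OF this gx(2) gx(3)] show ?thesis .
    qed
    have e1: "hpos n \<delta> (drop (N-1) (R@[c])) (length (R@[c]) - 1 - (N-1)) x0 = back_pos n \<delta> (last R) c x0"
      using dN N1 unfolding N_def by simp
    have e2: "(R@[c]) ! (N-1) = last R" using False N1 unfolding N_def by (simp add: nth_append last_conv_nth)
    obtain \<beta>1 where C1: "corr (n-k) \<beta> d (snd c) (snd (last R)) (back_pos n \<delta> (last R) c) \<beta>1"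
      using STEP[OF dp conjunct1[OF conjunct2[OF RS]] conjunct2[OF conjunct2[OF conjunct2[OF RS]]] conjunct1[OF conjunct2[OF conjunct2[OF RS]]] k snoc.prems(2) x0(1,2)] x0(3) e1 e2 by auto
    have lb1: "length \<beta>1 = n - k" using C1 unfolding corr_def by simp
    have "\<forall>i < length R - 1. \<exists>g x. Zst g x \<in> zeros (snd (last R)) \<and> take (Suc (n-k)) x = \<beta>1 @ [d] \<and>
        (\<forall>g'. Zst g' (hpos n \<delta> (drop i R) (length R - 1 - i) x) \<notin> zeros (top_st n (k-1) (snd (R ! i))))"
    proof (intro allI impI)
      fix i assume i: "i < length R - 1"
      have "i < length (R@[c]) - 1" using i by simp
      from snoc.prems(3)[rule_format, OF this] obtain g x where x: "Zst g x \<in> zeros (snd c)" "take (Suc (n-k)) x = \<beta> @ [d]"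
        "\<forall>g'. Zst g' (hpos n \<delta> (drop i (R@[c])) (length (R@[c]) - 1 - i) x) \<notin> zeros (top_st n (k-1) (snd ((R@[c]) ! i)))"
        unfolding last_snoc by blast
      have lx: "length x = n" using N_len[OF conjunct1[OF conjunct2[OF conjunct2[OF RS]]] x(1)] .
      have xs: "x = \<beta> @ d # drop (Suc (n-k)) x" using split_pos[OF x(2) snoc.prems(2)] lx k by simp
      have cx: "Zst g (\<beta>1 @ d # drop (Suc (n-k)) x) \<in> zeros (snd (last R))"
        "back_pos n \<delta> (last R) c x = \<beta>1 @ d # drop (Suc (n-k)) x"
        using C1 x(1) xs unfolding corr_def by (metis order_refl)+
      have di: "drop i (R@[c]) = drop i R @ [c]" "drop i R \<noteq> []" "last (drop i R) = last R" using i by auto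
      have "hpos n \<delta> (drop i (R@[c])) (length (R@[c]) - 1 - i) x = hpos n \<delta> (drop i R) (length R - 1 - i) (back_pos n \<delta> (last R) c x)"
        using hpos_snoc[OF di(2), of n \<delta> c x] di i by simp
      moreover have "(R@[c]) ! i = R ! i" using i by (auto simp: nth_append)
      ultimately show "\<exists>g x. Zst g x \<in> zeros (snd (last R)) \<and> take (Suc (n-k)) x = \<beta>1 @ [d] \<and>
        (\<forall>g'. Zst g' (hpos n \<delta> (drop i R) (length R - 1 - i) x) \<notin> zeros (top_st n (k-1) (snd (R ! i))))"
        using x(3) cx lb1 by (intro exI[of _ g] exI[of _ "\<beta>1 @ d # drop (Suc (n-k)) x"]) simp
    qed
    then obtain \<beta>0 where C0: "corr (n-k) \<beta>1 d (snd (last R)) (snd (hd R)) (hpos n \<delta> R (length R - 1)) \<beta>0"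
      using snoc.IH[OF conjunct1[OF RS] lb1] by blast
    have "corr (n-k) \<beta> d (snd c) (snd (hd R)) (hpos n \<delta> R (length R - 1) \<circ> back_pos n \<delta> (last R) c) \<beta>0"
      using corr_comp[OF C1 C0] .
    moreover have "hpos n \<delta> (R @ [c]) (length (R @ [c]) - 1) = hpos n \<delta> R (length R - 1) \<circ> back_pos n \<delta> (last R) c"
      using hpos_snoc[OF False, of n \<delta> c] by (simp add: fun_eq_iff)
    ultimately have "corr (n-k) \<beta> d (snd (last (R @ [c]))) (snd (hd (R @ [c]))) (hpos n \<delta> (R @ [c]) (length (R @ [c]) - 1)) \<beta>0" using False by simp
    then show ?thesis by blast
  qed
qed

lemma AP1: "wfst n j q s \<Longrightarrow> at_path s p = Some (Zst g x) \<Longrightarrow> x = q @ map Suc p \<and> Zst g x \<in> zeros s"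
proof (induction j arbitrary: q s p)
  case 0
  then obtain g' where s: "s = Zst g' q" using wf_level0 by blast
  with 0 show ?case by (cases p) auto
next
  case (Suc j)
  then obtain ss where s: "s = Lst ss" using wf_levelSuc by blast
  show ?case
  proof (cases p)
    case Nil then show ?thesis using Suc.prems s by simp
  next
    case (Cons i p')
    then have i: "i < length ss" "at_path (ss!i) p' = Some (Zst g x)" using Suc.prems s by (auto split: if_splits)
    have "wfst n j (q @ [Suc i]) (ss!i)" using Suc.prems(1) s i by simp
    from Suc.IH[OF this i(2)] have "x = q @ Suc i # map Suc p'" "Zst g x \<in> zeros (ss!i)" by auto
    then show ?thesis using Cons s i(1) zeros_Lst by auto
  qed
qed

lemma AP2: "wfst n j q s \<Longrightarrow> Zst g (q @ map Suc p) \<in> zeros s \<Longrightarrow> at_path s p = Some (Zst g (q @ map Suc p))"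
proof (induction j arbitrary: q s p)
  case 0
  then obtain g' where s: "s = Zst g' q" using wf_level0 by blast
  with 0 show ?case by auto
next
  case (Suc j)
  then obtain ss where s: "s = Lst ss" using wf_levelSuc by blast
  obtain i where i: "i < length ss" "Zst g (q @ map Suc p) \<in> zeros (ss!i)" using Suc.prems(2) s zeros_Lst by metis
  have w: "wfst n j (q @ [Suc i]) (ss!i)" using Suc.prems(1) s i by simp
  have "length (q @ map Suc p) = length q + Suc j" "take (Suc (length q)) (q @ map Suc p) = q @ [Suc i]"
    using wf_child_pos[OF Suc.prems(1)[unfolded s] i] by auto
  then obtain p' where p: "p = i # p'" by (cases p) auto
  have "at_path (ss!i) p' = Some (Zst g ((q @ [Suc i]) @ map Suc p'))" using Suc.IH[OF w] i(2) p by simp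
  then show ?case using s p i(1) by simp
qed

lemma LEAF_EX: "wfst n j q s \<Longrightarrow> s \<noteq> Lst [] \<Longrightarrow> \<exists>p g x. at_path s p = Some (Zst g x)"
proof (induction j arbitrary: q s)
  case 0
  then obtain g' where s: "s = Zst g' q" using wf_level0 by blast
  then show ?case by (intro exI[of _ "[]"]) auto
next
  case (Suc j)
  then obtain ss where s: "s = Lst ss" "ss \<noteq> []" using wf_levelSuc by blast
  have "wfst n j (q @ [Suc 0]) (ss!0)" "ss!0 \<noteq> Lst []" using Suc.prems(1) s by auto
  from Suc.IH[OF this] obtain p g x where "at_path (ss!0) p = Some (Zst g x)" by blast
  then show ?case using s by (intro exI[of _ "0 # p"]) auto
qed

lemma PD: "wfst n j q A \<Longrightarrow> wfst n j q' B \<Longrightarrow>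
  (\<forall>p g. (\<exists>x. at_path A p = Some (Zst g x)) = (\<exists>x. at_path B p = Some (Zst g x))) \<Longrightarrow> posdown A = posdown B"
proof (induction j arbitrary: q q' A B)
  case 0
  then obtain g1 g2 where "A = Zst g1 q" "B = Zst g2 q'" using wf_level0 by metis
  moreover have "\<exists>x. at_path B [] = Some (Zst g1 x)"
  proof -
    have "\<exists>x. at_path A [] = Some (Zst g1 x)" using \<open>A = Zst g1 q\<close> by simp
    then show ?thesis using 0(3) by blast
  qed
  ultimately show ?case by simp
next
  case (Suc j)
  obtain as bs where ab: "A = Lst as" "B = Lst bs" using Suc.prems(1,2) wf_levelSuc by metis
  have cA: "i < length as \<Longrightarrow> wfst n j (q @ [Suc i]) (as!i) \<and> as!i \<noteq> Lst []" for i using Suc.prems(1) ab by simp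
  have cB: "i < length bs \<Longrightarrow> wfst n j (q' @ [Suc i]) (bs!i) \<and> bs!i \<noteq> Lst []" for i using Suc.prems(2) ab by simp
  have len: "length as = length bs"
  proof (rule ccontr)
    assume "length as \<noteq> length bs"
    then consider "length as < length bs" | "length bs < length as" by linarith
    then show False
    proof cases
      case 1
      then obtain p g x where "at_path (bs ! length as) p = Some (Zst g x)" using LEAF_EX cB by blast
      then have "\<exists>x. at_path B (length as # p) = Some (Zst g x)" using ab 1 by auto
      then have "\<exists>x. at_path A (length as # p) = Some (Zst g x)" using Suc.prems(3) by blast
      then show False using ab by simp
    next
      case 2
      then obtain p g x where "at_path (as ! length bs) p = Some (Zst g x)" using LEAF_EX cA by blast
      then have "\<exists>x. at_path A (length bs # p) = Some (Zst g x)" using ab 2 by auto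
      then have "\<exists>x. at_path B (length bs # p) = Some (Zst g x)" using Suc.prems(3) by blast
      then show False using ab by simp
    qed
  qed
  have "posdown (as!i) = posdown (bs!i)" if i: "i < length as" for i
  proof -
    have "\<forall>p g. (\<exists>x. at_path (as!i) p = Some (Zst g x)) = (\<exists>x. at_path (bs!i) p = Some (Zst g x))"
    proof (intro allI)
      fix p g
      have "(\<exists>x. at_path A (i # p) = Some (Zst g x)) = (\<exists>x. at_path B (i # p) = Some (Zst g x))" using Suc.prems(3) by blast
      then show "(\<exists>x. at_path (as!i) p = Some (Zst g x)) = (\<exists>x. at_path (bs!i) p = Some (Zst g x))" using ab i len by simp
    qed
    moreover have "wfst n j (q @ [Suc i]) (as!i)" using cA i by blast
    moreover have "wfst n j (q' @ [Suc i]) (bs!i)" using cB i len by simp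
    ultimately show ?thesis using Suc.IH[of "q @ [Suc i]" "as!i" "q' @ [Suc i]" "bs!i"] by blast
  qed
  then show ?case using ab len by (simp add: list_eq_iff_nth_eq)
qed

lemma hist_eq: "nstack n (snd (hd R)) \<Longrightarrow> Zst g y \<in> zeros (snd (hd R)) \<Longrightarrow> hpos n \<delta> R (length R - 1) (zpos z) = y \<Longrightarrow>
   hist n \<delta> R z = Zst g y"
  unfolding hist_def
proof (rule the_equality)
  assume a: "nstack n (snd (hd R))" "Zst g y \<in> zeros (snd (hd R))" "hpos n \<delta> R (length R - 1) (zpos z) = y"
  show "Zst g y \<in> zeros (snd (hd R)) \<and> zpos (Zst g y) = hpos n \<delta> R (length R - 1) (zpos z)" using a by simp
  fix t assume t: "t \<in> zeros (snd (hd R)) \<and> zpos t = hpos n \<delta> R (length R - 1) (zpos z)"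
  then obtain g' x where "t = Zst g' x" using zeros_Zst by blast
  then show "t = Zst g y" using t a N_unique[OF a(1), of g y g'] by auto
qed

lemma top_last_index: "wfst n (Suc j) q (Lst ss) \<Longrightarrow> ss \<noteq> [] \<Longrightarrow> zpos (top_st (Suc j) 0 (Lst ss)) ! length q = length ss"
proof -
  assume a: "wfst n (Suc j) q (Lst ss)" "ss \<noteq> []"
  note L = top_last_facts[OF a]
  obtain g t where t: "top_st j 0 (last ss) = Zst g t" "Zst g t \<in> zeros (last ss)" using top_basic L by blast
  have "t ! length q = Suc (length ss - 1)" using child_pos[OF a(1), of "length ss - 1" g t] t(2) L a(2) by auto
  then show ?thesis using t a(2) by simp
qed

theorem mainTheorem8:
  fixes \<delta> :: "'q::finite \<Rightarrow> 'g::finite \<Rightarrow> ('q, 'a::finite, 'g) trans"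
    and n k :: nat and R :: "('q, 'g) config list"
  assumes "dpda n \<delta>" and "1 \<le> k" and "k \<le> n"
    and "is_run n \<delta> R" and "is_return n \<delta> k R"
  shows "\<exists>P. pop_st k k (top_st n k (snd (hd R))) = Some P \<and>
           posdown P = posdown (top_st n k (snd (last R))) \<and>
           (\<forall>p g x. at_path (top_st n k (snd (last R))) p = Some (Zst g x) \<longrightarrow>
                     at_path P p = Some (hist n \<delta> R (Zst g x)))"
proof -
  note dp = assms(1) and k = assms(2,3) and run = assms(4)
  define s0 where "s0 = snd (hd R)"
  define sN where "sN = snd (last R)"
  have Rne: "R \<noteq> []" using run unfolding is_run_def by simp
  have ns0: "nstack n s0" using run Rne unfolding is_run_def s0_def by simp
  have nsN: "nstack n sN" using run Rne unfolding is_run_def sN_def by simp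
  obtain P0 where P0: "pop_st n k s0 = Some P0"
    and HR: "\<forall>z\<in>zeros (top_st n (k - 1) sN). hist n \<delta> R z \<in> zeros (top_st n (k - 1) P0)"
    and NU: "\<forall>i < length R - 1. \<not> upper n \<delta> (drop i R) (k - 1)"
    using assms(5) unfolding is_return_def s0_def sN_def by blast
  obtain k' where k': "k = Suc k'" using k by (cases k) auto
  have kk: "k - 1 \<le> n" "n - (k-1) = Suc (n-k)" "n - k < n" "Suc n - k = Suc (n - k)" using k by auto
  obtain ts where ts: "top_st n k s0 = Lst ts" "2 \<le> length ts" "P0 = upd_top n k (\<lambda>_. Lst (butlast ts)) s0"
    using P0 unfolding pop_st_def by (auto split: stk.splits if_splits)
  define \<alpha> where "\<alpha> = take (n-k) (tp n s0)"
  have WT: "wfst n k \<alpha> (Lst ts)" "zeros (Lst ts) \<subseteq> zeros s0" using N_top[OF ns0 k(2)] ts(1) unfolding \<alpha>_def by auto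
  have la: "length \<alpha> = n - k" using N_tp[OF ns0] N_len[OF ns0] unfolding \<alpha>_def by fastforce
  define P where "P = Lst (butlast ts)"
  have popP: "pop_st k k (top_st n k s0) = Some P"
    unfolding ts(1) pop_st_def P_def using ts(2) k' by (simp add: top_self)
  have WP: "wfst n k \<alpha> P" using WT(1) k' unfolding P_def by (auto simp: nth_butlast)
  define tN where "tN = tp n sN"
  define \<beta> where "\<beta> = take (n-k) tN"
  define d where "d = tN ! (n-k)"
  have ltN: "length tN = n" using N_tp[OF nsN] N_len[OF nsN] unfolding tN_def by metis
  have lb: "length \<beta> = n - k" using ltN unfolding \<beta>_def by simp
  have tNd: "take (Suc (n-k)) tN = \<beta> @ [d]" using ltN kk unfolding \<beta>_def d_def by (simp add: take_Suc_conv_app_nth)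
  have NU2: "\<forall>i < length R - 1. \<exists>g x. Zst g x \<in> zeros (snd (last R)) \<and> take (Suc (n-k)) x = \<beta> @ [d] \<and>
        (\<forall>g'. Zst g' (hpos n \<delta> (drop i R) (length R - 1 - i) x) \<notin> zeros (top_st n (k-1) (snd (R ! i))))"
  proof (intro allI impI)
    fix i assume i: "i < length R - 1"
    have dl: "last (drop i R) = last R" "hd (drop i R) = R ! i" "length (drop i R) - 1 = length R - 1 - i"
      using i by (auto simp: hd_drop_conv_nth)
    have "\<not> upper n \<delta> (drop i R) (k - 1)" using NU i by blast
    then obtain z where z: "z \<in> zeros (top_st n (k-1) sN)" "hist n \<delta> (drop i R) z \<notin> zeros (top_st n (k-1) (snd (R ! i)))"
      unfolding upper_def dl sN_def by blast
    obtain g x where zx: "z = Zst g x" using zeros_Zst z(1) by blast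
    have xN: "Zst g x \<in> zeros sN" using N_top[OF nsN kk(1)] z(1) zx by auto
    have "take (Suc (n-k)) x = take (Suc (n-k)) tN" using N_F1[OF nsN kk(1) xN] z(1) zx kk(2,4) unfolding tN_def by simp
    then have tx: "take (Suc (n-k)) x = \<beta> @ [d]" using tNd by simp
    have nsi: "nstack n (snd (R ! i))" using run i unfolding is_run_def by auto
    have "\<forall>g'. Zst g' (hpos n \<delta> (drop i R) (length R - 1 - i) x) \<notin> zeros (top_st n (k-1) (snd (R ! i)))"
    proof (intro allI notI)
      fix g' assume a: "Zst g' (hpos n \<delta> (drop i R) (length R - 1 - i) x) \<in> zeros (top_st n (k-1) (snd (R ! i)))"
      then have a2: "Zst g' (hpos n \<delta> (drop i R) (length R - 1 - i) x) \<in> zeros (snd (hd (drop i R)))"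
        using N_top[OF nsi kk(1)] dl by auto
      have "hist n \<delta> (drop i R) z = Zst g' (hpos n \<delta> (drop i R) (length R - 1 - i) x)"
        using hist_eq[of n "drop i R" g' _ \<delta> z] nsi a2 dl zx by simp
      then show False using z(2) a by simp
    qed
    then show "\<exists>g x. Zst g x \<in> zeros (snd (last R)) \<and> take (Suc (n-k)) x = \<beta> @ [d] \<and>
        (\<forall>g'. Zst g' (hpos n \<delta> (drop i R) (length R - 1 - i) x) \<notin> zeros (top_st n (k-1) (snd (R ! i))))"
      using xN tx unfolding sN_def by blast
  qed
  obtain \<beta>0 where C: "corr (n-k) \<beta> d sN s0 (hpos n \<delta> R (length R - 1)) \<beta>0"
    using CORE[OF dp k run lb NU2] unfolding sN_def s0_def by blast
  have lb0: "length \<beta>0 = n - k" using C unfolding corr_def by simp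
  obtain gt where gt: "Zst gt tN \<in> zeros sN" using N_tp[OF nsN] unfolding tN_def by blast
  have gtk: "Zst gt tN \<in> zeros (top_st n (k-1) sN)" using N_F1[OF nsN kk(1) gt] kk unfolding tN_def by simp
  define rest0 where "rest0 = drop (Suc (n-k)) tN"
  have tNs: "tN = \<beta> @ d # rest0" using split_pos[OF tNd lb] ltN kk unfolding rest0_def by simp
  have c1: "Zst gt (\<beta>0 @ d # rest0) \<in> zeros s0" "hpos n \<delta> R (length R - 1) tN = \<beta>0 @ d # rest0"
    using C gt tNs unfolding corr_def by (metis order_refl)+
  have hN: "hist n \<delta> R (Zst gt tN) = Zst gt (\<beta>0 @ d # rest0)"
    using hist_eq[of n R gt "\<beta>0 @ d # rest0" \<delta> "Zst gt tN"] ns0 c1 unfolding s0_def by simp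
  have tP0: "top_st n (k-1) P0 = last (butlast ts)"
  proof -
    have "top_st n k P0 = Lst (butlast ts)" using UT2[of n n "[]" s0 k] ns0 k ts unfolding nstack_def by simp
    then show ?thesis using top_comp[of "k-1" k n P0] k k' top_pred by simp
  qed
  have lbt: "last (butlast ts) = ts ! (length ts - 2)"
  proof -
    have ne: "butlast ts \<noteq> []" using ts(2) by (metis length_butlast list.size(3) not_numeral_le_zero diff_is_0_eq Suc_1 not_less_eq_eq)
    have "last (butlast ts) = butlast ts ! (length (butlast ts) - 1)" using ne by (simp add: last_conv_nth)
    also have "\<dots> = ts ! (length ts - 2)" using ts(2) by (simp add: nth_butlast numeral_2_eq_2)
    finally show ?thesis .
  qed
  have wlb: "wfst n k' (\<alpha> @ [Suc (length ts - 2)]) (ts ! (length ts - 2))" using WT(1) k' ts(2) by simp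
  have "Zst gt (\<beta>0 @ d # rest0) \<in> zeros (ts ! (length ts - 2))" using HR gtk hN tP0 lbt by auto
  from wf_zeros[OF wlb this] have "take (Suc (n-k)) (\<beta>0 @ d # rest0) = \<alpha> @ [Suc (length ts - 2)]" using la by simp
  then have ab: "\<beta>0 = \<alpha>" "d = length ts - 1" using lb0 la ts(2) by auto
  define K where "K = top_st n k sN"
  have WK: "wfst n k \<beta> K" "K \<noteq> Lst []" "zeros K \<subseteq> zeros sN" using N_top[OF nsN k(2)] unfolding K_def \<beta>_def tN_def by auto
  obtain ks where ks: "K = Lst ks" "ks \<noteq> []" using WK k' wf_levelSuc by metis
  have "zpos (top_st k 0 K) ! length \<beta> = length ks" using top_last_index[of n k' \<beta> ks] WK ks k' by simp
  moreover have "top_st k 0 K = top_st n 0 sN" using top_comp[of 0 k n sN] k unfolding K_def by simp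
  ultimately have dks: "d = length ks" using lb unfolding d_def tN_def tp_def by simp
  have lP: "length (butlast ts) = d" using ab by simp
  have K2P: "at_path P p = Some (Zst g (\<alpha> @ map Suc p)) \<and> hist n \<delta> R (Zst g x) = Zst g (\<alpha> @ map Suc p)"
    if a: "at_path K p = Some (Zst g x)" for p g x
  proof -
    have x: "x = \<beta> @ map Suc p" "Zst g x \<in> zeros K" using AP1[OF WK(1) a] by auto
    obtain j p' where p: "p = j # p'" using a ks by (cases p) auto
    have j: "j < d" using a p ks dks by (auto split: if_splits)
    have xs: "x = \<beta> @ Suc j # map Suc p'" using x p by simp
    have xN: "Zst g x \<in> zeros sN" using x WK by auto
    have c: "Zst g (\<beta>0 @ Suc j # map Suc p') \<in> zeros s0" "hpos n \<delta> R (length R - 1) x = \<beta>0 @ Suc j # map Suc p'"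
      using C xN xs j unfolding corr_def by auto
    have inT: "Zst g (\<alpha> @ Suc j # map Suc p') \<in> zeros (top_st n k s0)"
      using N_F1[OF ns0 k(2)] c(1) ab la unfolding \<alpha>_def by simp
    have inT': "Zst g (\<alpha> @ map Suc (j # p')) \<in> zeros (Lst ts)" using inT ts(1) by simp
    have "at_path (Lst ts) (j # p') = Some (Zst g (\<alpha> @ map Suc (j # p')))"
      using AP2[OF WT(1) inT'] .
    then have "at_path P p = Some (Zst g (\<alpha> @ map Suc p))" using j lP p unfolding P_def by (auto simp: nth_butlast split: if_splits)
    moreover have "hist n \<delta> R (Zst g x) = Zst g (\<alpha> @ map Suc p)"
      using hist_eq[of n R g "\<alpha> @ map Suc p" \<delta> "Zst g x"] ns0 c ab p unfolding s0_def by simp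
    ultimately show ?thesis by blast
  qed
  have P2K: "\<exists>x'. at_path K p = Some (Zst g x')" if a: "at_path P p = Some (Zst g x)" for p g x
  proof -
    have x: "x = \<alpha> @ map Suc p" "Zst g x \<in> zeros P" using AP1[OF WP a] by auto
    obtain j p' where p: "p = j # p'" using a unfolding P_def by (cases p) auto
    have j: "j < d" using a p lP unfolding P_def by (auto split: if_splits)
    have "zeros P \<subseteq> zeros s0" using WT(2) ts(2) unfolding P_def by (auto dest: in_set_butlastD)
    then have x0: "Zst g (\<beta>0 @ Suc j # map Suc p') \<in> zeros s0" using x p ab by auto
    then have "Zst g (\<beta> @ Suc j # map Suc p') \<in> zeros sN" using C j unfolding corr_def by auto
    then have "Zst g (\<beta> @ Suc j # map Suc p') \<in> zeros K"
      using N_F1[OF nsN k(2)] lb unfolding K_def \<beta>_def tN_def by simp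
    then have "Zst g (\<beta> @ map Suc (j # p')) \<in> zeros K" by simp
    then have "at_path K (j # p') = Some (Zst g (\<beta> @ map Suc (j # p')))" using AP2[OF WK(1)] by blast
    then show ?thesis using p by blast
  qed
  have "posdown P = posdown K"
  proof (rule PD[OF WP WK(1)], intro allI)
    fix p g
    show "(\<exists>x. at_path P p = Some (Zst g x)) = (\<exists>x. at_path K p = Some (Zst g x))"
      using K2P P2K by blast
  qed
  moreover have "\<forall>p g x. at_path K p = Some (Zst g x) \<longrightarrow> at_path P p = Some (hist n \<delta> R (Zst g x))"
    using K2P by simp
  ultimately show ?thesis using popP unfolding s0_def K_def sN_def by blast
qed

end
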